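(* Let $N \geq 1$ and let $\mu$ be the uniform probability measure on the hypercube $\{0,1\}^N$. Let $\nu$ be any probability measure on $\{0,1\}^N$ satisfying $I(\nu|\mu) \geq 4W_1(\nu,\mu)$. Then $$H(\nu|\mu) \leq 2\sqrt{W_1(\nu,\mu)\, I(\nu|\mu)} - 2W_1(\nu,\mu).$$
   Context: For $x \in \{0,1\}^N$ and $i \in \{1,\dots,N\}$, $x^i$ denotes the configuration obtained from $x$ by flipping its $i$-th coordinate. Let $\rho = d\nu/d\mu$. The relative entropy is $H(\nu|\mu) = \sum_{x} \rho(x)\log\rho(x)\,\mu(x)$ (with $0\log 0 = 0$). The discrete (modified) Fisher information is $$I(\nu|\mu) = \frac{1}{2}\sum_{x\in\{0,1\}^N}\sum_{i=1}^N \big(\rho(x^i)-\rho(x)\big)\big(\log\rho(x^i)-\log\rho(x)\big)\mu(x),$$ with the value $+\infty$ if some term is infinite. The distance $W_1(\nu,\mu) = \inf \mathbb{E}[d(X,Y)]$, where the infimum is over all couplings of $X\sim\nu$ and $Y\sim\mu$, and $d$ is the Hamming distance on $\{0,1\}^N$. *)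

theory Defs
  imports "HOL-Analysis.Analysis"
begin

definition cube :: "nat \<Rightarrow> bool list set" where
  "cube N = {xs. length xs = N}"

definition flip :: "bool list \<Rightarrow> nat \<Rightarrow> bool list" where
  "flip x i = x[i := \<not> x ! i]"

definition hamming :: "bool list \<Rightarrow> bool list \<Rightarrow> nat" where
  "hamming x y = card {i. i < length x \<and> x ! i \<noteq> y ! i}"

definition unif :: "nat \<Rightarrow> bool list \<Rightarrow> real" where
  "unif N x = 1 / 2 ^ N"

definition is_prob :: "nat \<Rightarrow> (bool list \<Rightarrow> real) \<Rightarrow> bool" where
  "is_prob N \<nu> \<longleftrightarrow> (\<forall>x\<in>cube N. \<nu> x \<ge> 0) \<and> (\<Sum>x\<in>cube N. \<nu> x) = 1"

definition dens :: "nat \<Rightarrow> (bool list \<Rightarrow> real) \<Rightarrow> bool list \<Rightarrow> real" where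
  "dens N \<nu> x = \<nu> x / unif N x"

definition rel_entropy :: "nat \<Rightarrow> (bool list \<Rightarrow> real) \<Rightarrow> real" where
  "rel_entropy N \<nu> =
     (\<Sum>x\<in>cube N. (if dens N \<nu> x = 0 then 0 else dens N \<nu> x * ln (dens N \<nu> x)) * unif N x)"

text \<open>Modified Fisher information, +infinity if some term is infinite
  (i.e. exactly one of rho(x), rho(x^i) vanishes); terms with both zero are 0.\<close>
definition fisher_info :: "nat \<Rightarrow> (bool list \<Rightarrow> real) \<Rightarrow> ereal" where
  "fisher_info N \<nu> =
    (if \<exists>x\<in>cube N. \<exists>i<N. (dens N \<nu> (flip x i) = 0) \<noteq> (dens N \<nu> x = 0) then \<infinity>
     else ereal (1/2 * (\<Sum>x\<in>cube N. \<Sum>i<N.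
        (if dens N \<nu> x = 0 \<and> dens N \<nu> (flip x i) = 0 then 0 else
          (dens N \<nu> (flip x i) - dens N \<nu> x) * (ln (dens N \<nu> (flip x i)) - ln (dens N \<nu> x)))
        * unif N x)))"

definition is_coupling :: "nat \<Rightarrow> (bool list \<Rightarrow> real) \<Rightarrow> (bool list \<Rightarrow> real)
     \<Rightarrow> (bool list \<Rightarrow> bool list \<Rightarrow> real) \<Rightarrow> bool" where
  "is_coupling N \<nu> \<mu> \<pi> \<longleftrightarrow>
     (\<forall>x\<in>cube N. \<forall>y\<in>cube N. \<pi> x y \<ge> 0) \<and>
     (\<forall>x\<in>cube N. (\<Sum>y\<in>cube N. \<pi> x y) = \<nu> x) \<and>
     (\<forall>y\<in>cube N. (\<Sum>x\<in>cube N. \<pi> x y) = \<mu> y)"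

definition W1 :: "nat \<Rightarrow> (bool list \<Rightarrow> real) \<Rightarrow> (bool list \<Rightarrow> real) \<Rightarrow> real" where
  "W1 N \<nu> \<mu> = Inf {(\<Sum>x\<in>cube N. \<Sum>y\<in>cube N. \<pi> x y * real (hamming x y)) | \<pi>.
                     is_coupling N \<nu> \<mu> \<pi>}"

end

theory Submission
  imports Defs
begin

lemma finite_cube: "finite (cube N)"
proof -
  have "cube N = {xs. set xs \<subseteq> (UNIV::bool set) \<and> length xs = N}" by (auto simp: cube_def)
  then show ?thesis using finite_lists_length_eq[of "UNIV::bool set" N] by simp
qed

lemma card_cube: "card (cube N) = 2 ^ N"
proof -
  have "cube N = {xs. set xs \<subseteq> (UNIV::bool set) \<and> length xs = N}" by (auto simp: cube_def)
  then show ?thesis using card_lists_length_eq[of "UNIV::bool set" N] by (simp add: card_UNIV_bool)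
qed

lemma flip_cube[simp]: "x \<in> cube N \<Longrightarrow> flip x i \<in> cube N"
  by (simp add: cube_def flip_def)

lemma flip_flip[simp]: "flip (flip x i) i = x"
  by (cases "i < length x") (auto simp: flip_def list_update_beyond)

lemma flip_out: "\<not> i < length x \<Longrightarrow> flip x i = x"
  by (simp add: flip_def list_update_beyond)

lemma flip_comm: "flip (flip x i) j = flip (flip x j) i"
  apply (cases "i = j", simp)
  apply (cases "i < length x"; cases "j < length x")
  by (auto simp: flip_def list_update_swap)

lemma sum_flip: "(\<Sum>x\<in>cube N. f (flip x i)) = (\<Sum>x\<in>cube N. f x)"
  by (rule sum.reindex_bij_witness[where i="\<lambda>x. flip x i" and j="\<lambda>x. flip x i"]) auto


definition Psi :: "real \<Rightarrow> real \<Rightarrow> real" where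
  "Psi a b = (a - b) * (ln a - ln b)"

definition Aop :: "real \<Rightarrow> nat \<Rightarrow> (bool list \<Rightarrow> real) \<Rightarrow> bool list \<Rightarrow> real" where
  "Aop q i g x = (1 - q) * g x + q * g (flip x i)"

fun Top :: "real \<Rightarrow> nat \<Rightarrow> (bool list \<Rightarrow> real) \<Rightarrow> bool list \<Rightarrow> real" where
  "Top q 0 g = g"
| "Top q (Suc n) g = Aop q n (Top q n g)"

fun Sop :: "real \<Rightarrow> nat \<Rightarrow> (bool list \<Rightarrow> real) \<Rightarrow> bool list \<Rightarrow> real" where
  "Sop q 0 G = G"
| "Sop q (Suc n) G = Sop q n (Aop q n G)"

definition Ent :: "nat \<Rightarrow> (bool list \<Rightarrow> real) \<Rightarrow> real" where
  "Ent N g = (\<Sum>x\<in>cube N. g x * ln (g x))"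

definition Fi :: "nat \<Rightarrow> nat \<Rightarrow> (bool list \<Rightarrow> real) \<Rightarrow> real" where
  "Fi N i g = (\<Sum>x\<in>cube N. Psi (g (flip x i)) (g x))"

lemma ent_pt: fixes u v :: real assumes "u > 0" "v > 0"
  shows "u * ln u - v * ln v \<le> (ln u + 1) * (u - v)"
proof -
  have "ln (u / v) \<le> u / v - 1" using assms by (intro ln_le_minus_one) auto
  then have "v * ln (u / v) \<le> v * (u / v - 1)" using assms by (intro mult_left_mono) auto
  moreover have "v * (u / v - 1) = u - v" using assms by (simp add: field_simps)
  moreover have "ln (u / v) = ln u - ln v" using assms by (simp add: ln_div)
  ultimately have "v * ln u - v * ln v \<le> u - v" by (simp add: right_diff_distrib)
  then show ?thesis by (simp add: algebra_simps)
qed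

lemma log_sum2: fixes a1 a2 b1 b2 :: real
  assumes "a1 > 0" "a2 > 0" "b1 > 0" "b2 > 0"
  shows "(a1 + a2) * ln ((a1 + a2) / (b1 + b2)) \<le> a1 * ln (a1 / b1) + a2 * ln (a2 / b2)"
proof -
  define A where "A = a1 + a2"
  define B where "B = b1 + b2"
  have AB: "A > 0" "B > 0" using assms by (auto simp: A_def B_def)
  have l: "ln y \<ge> 1 - 1 / y" if "y > 0" for y :: real
  proof -
    have "ln (1/y) \<le> 1/y - 1" using that by (intro ln_le_minus_one) auto
    then show ?thesis using that by (simp add: ln_div)
  qed
  have e1: "a1 * ln (a1 / b1) - a1 * ln (A / B) = a1 * ln ((a1 * B) / (b1 * A))"
    using assms AB by (simp add: ln_div ln_mult algebra_simps)
  have e2: "a2 * ln (a2 / b2) - a2 * ln (A / B) = a2 * ln ((a2 * B) / (b2 * A))"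
    using assms AB by (simp add: ln_div ln_mult algebra_simps)
  have i1: "a1 * ln ((a1 * B) / (b1 * A)) \<ge> a1 * (1 - (b1 * A) / (a1 * B))"
    using l[of "(a1 * B) / (b1 * A)"] assms AB by (intro mult_left_mono) auto
  have i2: "a2 * ln ((a2 * B) / (b2 * A)) \<ge> a2 * (1 - (b2 * A) / (a2 * B))"
    using l[of "(a2 * B) / (b2 * A)"] assms AB by (intro mult_left_mono) auto
  have s: "a1 * (1 - (b1 * A) / (a1 * B)) + a2 * (1 - (b2 * A) / (a2 * B)) = 0"
  proof -
    have "a1 * (1 - (b1 * A) / (a1 * B)) = a1 - b1 * A / B" using assms AB by (simp add: field_simps)
    moreover have "a2 * (1 - (b2 * A) / (a2 * B)) = a2 - b2 * A / B" using assms AB by (simp add: field_simps)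
    moreover have "b1 * A / B + b2 * A / B = A" using AB by (simp add: B_def add_divide_distrib[symmetric] distrib_right[symmetric])
    ultimately show ?thesis by (simp add: A_def)
  qed
  have "A * ln (A / B) = a1 * ln (A / B) + a2 * ln (A / B)" by (simp add: A_def distrib_right)
  then have "A * ln (A / B) \<le> a1 * ln (a1 / b1) + a2 * ln (a2 / b2)" using e1 e2 i1 i2 s by linarith
  then show ?thesis by (simp add: A_def B_def)
qed

lemma Psi_alt: "a > 0 \<Longrightarrow> b > 0 \<Longrightarrow> Psi a b = a * ln (a / b) + b * ln (b / a)"
  by (simp add: Psi_def ln_div algebra_simps)

lemma Psi_convex:
  assumes "a > 0" "b > 0" "c > 0" "d > 0" "0 < q" "q < 1"
  shows "Psi ((1-q)*a + q*c) ((1-q)*b + q*d) \<le> (1-q) * Psi a b + q * Psi c d"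
proof -
  have p: "(1-q)*a > 0" "(1-q)*b > 0" "q*c > 0" "q*d > 0" using assms by auto
  have h1: "((1-q)*a + q*c) * ln (((1-q)*a + q*c) / ((1-q)*b + q*d)) \<le> (1-q)*a * ln (a/b) + q*c * ln (c/d)"
    using log_sum2[OF p(1) p(3) p(2) p(4)] assms by simp
  have h2: "((1-q)*b + q*d) * ln (((1-q)*b + q*d) / ((1-q)*a + q*c)) \<le> (1-q)*b * ln (b/a) + q*d * ln (d/c)"
    using log_sum2[OF p(2) p(4) p(1) p(3)] assms by simp
  have "Psi ((1-q)*a + q*c) ((1-q)*b + q*d) =
     ((1-q)*a + q*c) * ln (((1-q)*a + q*c) / ((1-q)*b + q*d)) + ((1-q)*b + q*d) * ln (((1-q)*b + q*d) / ((1-q)*a + q*c))"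
    using p by (intro Psi_alt) auto
  also have "\<dots> \<le> (1-q)*a * ln (a/b) + q*c * ln (c/d) + ((1-q)*b * ln (b/a) + q*d * ln (d/c))"
    using h1 h2 by linarith
  also have "\<dots> = (1-q) * Psi a b + q * Psi c d"
    using assms by (simp add: Psi_alt algebra_simps)
  finally show ?thesis .
qed


lemma Aop_pos: "\<forall>x\<in>cube N. g x > 0 \<Longrightarrow> 0 \<le> q \<Longrightarrow> q \<le> 1 \<Longrightarrow> \<forall>x\<in>cube N. Aop q i g x > 0"
proof
  fix x assume a: "\<forall>x\<in>cube N. g x > 0" "0 \<le> q" "q \<le> 1" and x: "x \<in> cube N"
  have "g x > 0" "g (flip x i) > 0" using a x by auto
  then show "Aop q i g x > 0" unfolding Aop_def using a
    by (cases "q = 1") (auto intro: add_pos_nonneg add_nonneg_pos)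
qed

lemma Aop_nonneg: "\<forall>x\<in>cube N. g x \<ge> 0 \<Longrightarrow> 0 \<le> q \<Longrightarrow> q \<le> 1 \<Longrightarrow> \<forall>x\<in>cube N. Aop q i g x \<ge> 0"
  unfolding Aop_def by auto

lemma Aop_sum: "(\<Sum>x\<in>cube N. Aop q i g x) = (\<Sum>x\<in>cube N. g x)"
proof -
  have "(\<Sum>x\<in>cube N. Aop q i g x) = (1 - q) * (\<Sum>x\<in>cube N. g x) + q * (\<Sum>x\<in>cube N. g (flip x i))"
    by (simp add: Aop_def sum.distrib sum_distrib_left)
  also have "\<dots> = (\<Sum>x\<in>cube N. g x)" by (simp add: sum_flip algebra_simps)
  finally show ?thesis .
qed

lemma Aop_adj: "(\<Sum>x\<in>cube N. Aop q i h x * F x) = (\<Sum>x\<in>cube N. h x * Aop q i F x)"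
proof -
  have "(\<Sum>x\<in>cube N. h (flip x i) * F x) = (\<Sum>x\<in>cube N. h (flip (flip x i) i) * F (flip x i))"
    by (rule sum_flip[symmetric, of "\<lambda>x. h (flip x i) * F x"])
  then have e: "(\<Sum>x\<in>cube N. h (flip x i) * F x) = (\<Sum>x\<in>cube N. h x * F (flip x i))" by simp
  have "(\<Sum>x\<in>cube N. Aop q i h x * F x) = (1-q) * (\<Sum>x\<in>cube N. h x * F x) + q * (\<Sum>x\<in>cube N. h (flip x i) * F x)"
    unfolding sum_distrib_left sum.distrib[symmetric] by (intro sum.cong refl) (simp add: Aop_def algebra_simps)
  also have "\<dots> = (\<Sum>x\<in>cube N. h x * Aop q i F x)"
    unfolding e sum_distrib_left sum.distrib[symmetric] by (intro sum.cong refl) (simp add: Aop_def algebra_simps)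
  finally show ?thesis .
qed

lemma ent_step:
  assumes pos: "\<forall>x\<in>cube N. g x > 0" and q: "0 \<le> q" "q \<le> 1"
  shows "Ent N g - Ent N (Aop q i g) \<le> q / 2 * Fi N i g"
proof -
  have Ap: "\<forall>x\<in>cube N. Aop q i g x > 0" using Aop_pos[OF pos q] .
  have "Ent N g - Ent N (Aop q i g) = (\<Sum>x\<in>cube N. g x * ln (g x) - Aop q i g x * ln (Aop q i g x))"
    by (simp add: Ent_def sum_subtractf)
  also have "\<dots> \<le> (\<Sum>x\<in>cube N. (ln (g x) + 1) * (g x - Aop q i g x))"
    using pos Ap by (intro sum_mono ent_pt) auto
  also have "\<dots> = q * (\<Sum>x\<in>cube N. ln (g x) * (g x - g (flip x i))) + q * (\<Sum>x\<in>cube N. (g x - g (flip x i)))"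
    unfolding sum_distrib_left sum.distrib[symmetric] by (intro sum.cong refl) (simp add: Aop_def algebra_simps)
  also have "(\<Sum>x\<in>cube N. (g x - g (flip x i))) = 0"
    by (simp add: sum_subtractf sum_flip)
  also have "(\<Sum>x\<in>cube N. ln (g x) * (g x - g (flip x i))) = Fi N i g / 2"
  proof -
    let ?P = "(\<Sum>x\<in>cube N. ln (g x) * (g x - g (flip x i)))"
    have "?P = (\<Sum>x\<in>cube N. ln (g (flip x i)) * (g (flip x i) - g (flip (flip x i) i)))"
      by (rule sum_flip[symmetric, of "\<lambda>x. ln (g x) * (g x - g (flip x i))"])
    then have e: "?P = (\<Sum>x\<in>cube N. ln (g (flip x i)) * (g (flip x i) - g x))" by simp
    have "Fi N i g = (\<Sum>x\<in>cube N. ln (g (flip x i)) * (g (flip x i) - g x)) + ?P"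
      unfolding Fi_def Psi_def by (simp add: sum.distrib[symmetric] algebra_simps)
    then show ?thesis using e by simp
  qed
  finally show ?thesis by simp
qed

lemma fi_step:
  assumes pos: "\<forall>x\<in>cube N. g x > 0" and q: "0 < q" "q < 1"
  shows "Fi N i (Aop q j g) \<le> Fi N i g"
proof -
  have "Fi N i (Aop q j g) = (\<Sum>x\<in>cube N. Psi ((1-q) * g (flip x i) + q * g (flip (flip x j) i)) ((1-q) * g x + q * g (flip x j)))"
    unfolding Fi_def Aop_def by (simp add: flip_comm)
  also have "\<dots> \<le> (\<Sum>x\<in>cube N. (1-q) * Psi (g (flip x i)) (g x) + q * Psi (g (flip (flip x j) i)) (g (flip x j)))"
    using pos q by (intro sum_mono Psi_convex) auto
  also have "\<dots> = (1-q) * Fi N i g + q * (\<Sum>x\<in>cube N. Psi (g (flip (flip x j) i)) (g (flip x j)))"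
    unfolding Fi_def by (simp add: sum.distrib sum_distrib_left)
  also have "(\<Sum>x\<in>cube N. Psi (g (flip (flip x j) i)) (g (flip x j))) = Fi N i g"
    unfolding Fi_def by (rule sum_flip[of "\<lambda>y. Psi (g (flip y i)) (g y)"])
  finally show ?thesis by (simp add: algebra_simps)
qed


lemma Top_pos: "\<forall>x\<in>cube N. g x > 0 \<Longrightarrow> 0 \<le> q \<Longrightarrow> q \<le> 1 \<Longrightarrow> \<forall>x\<in>cube N. Top q n g x > 0"
  by (induction n) (auto intro: Aop_pos[rule_format])

lemma Top_nonneg: "\<forall>x\<in>cube N. g x \<ge> 0 \<Longrightarrow> 0 \<le> q \<Longrightarrow> q \<le> 1 \<Longrightarrow> \<forall>x\<in>cube N. Top q n g x \<ge> 0"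
  by (induction n) (auto intro: Aop_nonneg[rule_format])

lemma Top_sum: "(\<Sum>x\<in>cube N. Top q n g x) = (\<Sum>x\<in>cube N. g x)"
  by (induction n) (auto simp: Aop_sum)

lemma Sop_sum: "(\<Sum>x\<in>cube N. Sop q n G x) = (\<Sum>x\<in>cube N. G x)"
  by (induction n arbitrary: G) (auto simp: Aop_sum)

lemma Top_adj: "(\<Sum>x\<in>cube N. Top q n h x * F x) = (\<Sum>x\<in>cube N. h x * Sop q n F x)"
  by (induction n arbitrary: F) (auto simp: Aop_adj)

lemma Top_fi:
  assumes pos: "\<forall>x\<in>cube N. g x > 0" and q: "0 < q" "q < 1"
  shows "Fi N i (Top q n g) \<le> Fi N i g"
proof (induction n)
  case 0 then show ?case by simp
next
  case (Suc n)
  have "Fi N i (Top q (Suc n) g) \<le> Fi N i (Top q n g)"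
    using fi_step[OF Top_pos[OF pos] q] q by simp
  then show ?case using Suc by simp
qed

lemma Top_ent:
  assumes pos: "\<forall>x\<in>cube N. g x > 0" and q: "0 < q" "q < 1"
  shows "Ent N g - Ent N (Top q n g) \<le> q / 2 * (\<Sum>i<n. Fi N i g)"
proof (induction n)
  case 0 then show ?case by simp
next
  case (Suc n)
  have "Ent N (Top q n g) - Ent N (Top q (Suc n) g) \<le> q / 2 * Fi N n (Top q n g)"
    using ent_step[OF Top_pos[OF pos] ] q by simp
  also have "\<dots> \<le> q / 2 * Fi N n g" using Top_fi[OF pos q] q by (intro mult_left_mono) auto
  finally show ?case using Suc by (simp add: distrib_left)
qed

lemma Top_ratio:
  assumes nn: "\<forall>x\<in>cube N. g x \<ge> 0" and q: "0 < q" "q \<le> 1/2"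
  shows "\<forall>i<n. \<forall>x\<in>cube N. Top q n g (flip x i) \<le> (1-q)/q * Top q n g x"
proof (induction n)
  case 0 then show ?case by simp
next
  case (Suc n)
  let ?h = "Top q n g"
  let ?c = "(1-q)/q"
  have hn: "\<forall>x\<in>cube N. ?h x \<ge> 0" using Top_nonneg[OF nn] q by simp
  show ?case
  proof (intro allI impI ballI)
    fix i x assume i: "i < Suc n" and x: "x \<in> cube N"
    show "Top q (Suc n) g (flip x i) \<le> ?c * Top q (Suc n) g x"
    proof (cases "i < n")
      case True
      have a: "?h (flip x i) \<le> ?c * ?h x" using Suc True x by auto
      have b: "?h (flip (flip x n) i) \<le> ?c * ?h (flip x n)" using Suc True x by auto
      have "Top q (Suc n) g (flip x i) = (1-q) * ?h (flip x i) + q * ?h (flip (flip x n) i)"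
        by (simp add: Aop_def flip_comm)
      also have "\<dots> \<le> (1-q) * (?c * ?h x) + q * (?c * ?h (flip x n))"
        using a b q by (intro add_mono mult_left_mono) auto
      also have "\<dots> = ?c * Top q (Suc n) g x" unfolding Top.simps Aop_def by (simp only: distrib_left mult.left_commute)
      finally show ?thesis .
    next
      case False
      then have [simp]: "i = n" using i by simp
      have h0: "?h x \<ge> 0" "?h (flip x n) \<ge> 0" using hn x by auto
      have "q * q \<le> (1-q) * (1-q)" using q by (intro mult_mono) auto
      then have "q \<le> (1-q)*(1-q)/q" using q by (simp add: field_simps)
      then have "q * ?h x \<le> ((1-q)*(1-q)/q) * ?h x" using h0 by (intro mult_right_mono) auto
      have c1: "?c * q = 1 - q" using q by simp
      have c2: "?c*(1-q) = (1-q)*(1-q)/q" by simp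
      have e: "?c * ((1-q)*?h x + q*?h (flip x n)) = ((1-q)*(1-q)/q) * ?h x + (1-q) * ?h (flip x n)"
        by (simp only: distrib_left mult.assoc[symmetric] c1 c2)
      have "Top q (Suc n) g (flip x i) = (1-q) * ?h (flip x n) + q * ?h x" by (simp add: Aop_def)
      moreover have "Top q (Suc n) g x = (1-q)*?h x + q*?h (flip x n)" by (simp add: Aop_def)
      ultimately show ?thesis using e \<open>q * ?h x \<le> ((1-q)*(1-q)/q) * ?h x\<close> by simp
    qed
  qed
qed

lemma Sop_lip:
  assumes "\<forall>i. \<forall>x\<in>cube N. \<bar>G (flip x i) - G x\<bar> \<le> L" and q: "0 \<le> q" "q \<le> 1"
  shows "\<forall>i. \<forall>x\<in>cube N. \<bar>Sop q n G (flip x i) - Sop q n G x\<bar> \<le> L"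
  using assms(1)
proof (induction n arbitrary: G)
  case 0 then show ?case by simp
next
  case (Suc n)
  have "\<forall>i. \<forall>x\<in>cube N. \<bar>Aop q n G (flip x i) - Aop q n G x\<bar> \<le> L"
  proof (intro allI ballI)
    fix i x assume x: "x \<in> cube N"
    have a: "\<bar>G (flip x i) - G x\<bar> \<le> L" "\<bar>G (flip (flip x n) i) - G (flip x n)\<bar> \<le> L"
      using Suc.prems x by auto
    have "Aop q n G (flip x i) - Aop q n G x = (1-q) * (G (flip x i) - G x) + q * (G (flip (flip x n) i) - G (flip x n))"
      by (simp add: Aop_def flip_comm algebra_simps)
    also have "\<bar>\<dots>\<bar> \<le> (1-q) * \<bar>G (flip x i) - G x\<bar> + q * \<bar>G (flip (flip x n) i) - G (flip x n)\<bar>"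
      using q by (auto intro: order.trans[OF abs_triangle_ineq] simp: abs_mult)
    also have "\<dots> \<le> (1-q) * L + q * L" using a q by (intro add_mono mult_left_mono) auto
    finally show "\<bar>Aop q n G (flip x i) - Aop q n G x\<bar> \<le> L" by (simp add: algebra_simps)
  qed
  then show ?case using Suc.IH by simp
qed

lemma lip_ham:
  assumes "\<forall>i. \<forall>x\<in>cube N. G (flip x i) - G x \<le> L"
  shows "x \<in> cube N \<Longrightarrow> y \<in> cube N \<Longrightarrow> G x - G y \<le> L * real (hamming x y)"
proof (induction "hamming x y" arbitrary: x)
  case 0
  then have "{i. i < length x \<and> x ! i \<noteq> y ! i} = {}"
    unfolding hamming_def by (simp add: finite_cube)
  then have "x = y" using 0 by (auto simp: cube_def intro: nth_equalityI)
  then show ?case using "0.hyps" by (metis diff_self mult_zero_right of_nat_0 order_refl)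
next
  case (Suc k)
  let ?D = "{i. i < length x \<and> x ! i \<noteq> y ! i}"
  have "card ?D = Suc k" using Suc.hyps(2) by (simp add: hamming_def)
  then obtain i where i: "i \<in> ?D" by (metis card.empty ex_in_conv nat.distinct(1))
  have "{j. j < length (flip x i) \<and> flip x i ! j \<noteq> y ! j} = ?D - {i}"
    using i by (auto simp: flip_def nth_list_update)
  then have "hamming (flip x i) y = k" using \<open>card ?D = Suc k\<close> i by (simp add: hamming_def)
  then have ih: "G (flip x i) - G y \<le> L * real k" using Suc.hyps(1)[of "flip x i"] Suc.prems by simp
  have "G (flip (flip x i) i) - G (flip x i) \<le> L" using assms flip_cube[OF Suc.prems(1)] by blast
  then have "G x - G (flip x i) \<le> L" by simp
  then show ?case using ih Suc.hyps(2)[symmetric] by (simp add: algebra_simps)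
qed


lemma unif_sum: "(\<Sum>y\<in>cube N. unif N y) = 1"
  by (simp add: unif_def card_cube)

lemma prod_coupling:
  assumes "is_prob N \<nu>"
  shows "is_coupling N \<nu> (unif N) (\<lambda>x y. \<nu> x * unif N y)"
  using assms unfolding is_coupling_def is_prob_def
  by (auto simp: sum_distrib_left[symmetric] sum_distrib_right[symmetric] unif_sum)
     (auto simp: unif_def)

lemma W1_nonneg:
  assumes "is_prob N \<nu>"
  shows "0 \<le> W1 N \<nu> (unif N)"
  unfolding W1_def
proof (rule cInf_greatest)
  show "{\<Sum>x\<in>cube N. \<Sum>y\<in>cube N. \<pi> x y * real (hamming x y) |\<pi>. is_coupling N \<nu> (unif N) \<pi>} \<noteq> {}"
    using prod_coupling[OF assms] by blast
next
  fix s assume "s \<in> {\<Sum>x\<in>cube N. \<Sum>y\<in>cube N. \<pi> x y * real (hamming x y) |\<pi>. is_coupling N \<nu> (unif N) \<pi>}"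
  then obtain \<pi> where "is_coupling N \<nu> (unif N) \<pi>" and s: "s = (\<Sum>x\<in>cube N. \<Sum>y\<in>cube N. \<pi> x y * real (hamming x y))"
    by blast
  then show "0 \<le> s" unfolding is_coupling_def by (auto intro!: sum_nonneg)
qed

lemma W1_lower:
  assumes prob: "is_prob N \<nu>"
    and lip: "\<And>x y. x \<in> cube N \<Longrightarrow> y \<in> cube N \<Longrightarrow> G x - G y \<le> L * real (hamming x y)"
    and L: "L \<ge> 0"
  shows "(\<Sum>x\<in>cube N. \<nu> x * G x) - (\<Sum>y\<in>cube N. unif N y * G y) \<le> L * W1 N \<nu> (unif N)"
proof -
  let ?S = "{\<Sum>x\<in>cube N. \<Sum>y\<in>cube N. \<pi> x y * real (hamming x y) |\<pi>. is_coupling N \<nu> (unif N) \<pi>}"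
  let ?X = "(\<Sum>x\<in>cube N. \<nu> x * G x) - (\<Sum>y\<in>cube N. unif N y * G y)"
  have ne: "?S \<noteq> {}" using prod_coupling[OF prob] by blast
  have bd: "?X \<le> L * s" if "s \<in> ?S" for s
  proof -
    obtain \<pi> where c: "is_coupling N \<nu> (unif N) \<pi>" and s: "s = (\<Sum>x\<in>cube N. \<Sum>y\<in>cube N. \<pi> x y * real (hamming x y))"
      using \<open>s \<in> ?S\<close> by blast
    have m1: "(\<Sum>x\<in>cube N. \<nu> x * G x) = (\<Sum>x\<in>cube N. \<Sum>y\<in>cube N. \<pi> x y * G x)"
      using c unfolding is_coupling_def by (intro sum.cong refl) (simp add: sum_distrib_right[symmetric])
    have m2: "(\<Sum>y\<in>cube N. unif N y * G y) = (\<Sum>x\<in>cube N. \<Sum>y\<in>cube N. \<pi> x y * G y)"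
    proof -
      have "(\<Sum>y\<in>cube N. unif N y * G y) = (\<Sum>y\<in>cube N. \<Sum>x\<in>cube N. \<pi> x y * G y)"
        using c unfolding is_coupling_def by (intro sum.cong refl) (simp add: sum_distrib_right[symmetric])
      also have "\<dots> = (\<Sum>x\<in>cube N. \<Sum>y\<in>cube N. \<pi> x y * G y)" by (rule sum.swap)
      finally show ?thesis .
    qed
    have "?X = (\<Sum>x\<in>cube N. \<Sum>y\<in>cube N. \<pi> x y * (G x - G y))"
      unfolding m1 m2 by (simp add: sum_subtractf[symmetric] right_diff_distrib)
    also have "\<dots> \<le> (\<Sum>x\<in>cube N. \<Sum>y\<in>cube N. \<pi> x y * (L * real (hamming x y)))"
      using c lip unfolding is_coupling_def by (intro sum_mono mult_left_mono) auto
    also have "\<dots> = L * s" unfolding s by (simp add: sum_distrib_left algebra_simps)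
    finally show ?thesis .
  qed
  show ?thesis
  proof (cases "L = 0")
    case True
    obtain s where "s \<in> ?S" using ne by blast
    then show ?thesis using bd True by fastforce
  next
    case False
    then have Lp: "L > 0" using L by simp
    have "?X / L \<le> Inf ?S"
      using ne bd Lp by (intro cInf_greatest) (auto simp: divide_simps mult.commute)
    then show ?thesis using Lp unfolding W1_def by (simp add: divide_simps mult.commute)
  qed
qed

lemma final_arith:
  fixes H I W :: real
  assumes W: "W \<ge> 0" and WI: "4 * W \<le> I" and key: "\<And>q. 0 < q \<Longrightarrow> q \<le> 1/2 \<Longrightarrow> H \<le> q * I + (1/q - 2) * W"
  shows "H \<le> 2 * sqrt (W * I) - 2 * W"
proof (cases "W = 0")
  case True
  show ?thesis
  proof (rule ccontr)
    assume "\<not> ?thesis"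
    then have Hp: "H > 0" using True by simp
    show False
    proof (cases "I \<le> 0")
      case True
      have "H \<le> 1/2 * I + (1/(1/2) - 2) * W" by (rule key) auto
      then show False using True Hp \<open>W = 0\<close> by simp
    next
      case False
      define q where "q = min (1/2) (H / (2 * I))"
      have q: "0 < q" "q \<le> 1/2" using Hp False by (auto simp: q_def)
      have qle: "q \<le> H / (2 * I)" by (simp add: q_def)
      have "q * I \<le> H / (2 * I) * I" using False qle by (intro mult_right_mono) auto
      also have "\<dots> = H / 2" using False by simp
      finally have "q * I \<le> H / 2" .
      moreover have "H \<le> q * I + (1/q - 2) * W" by (rule key[OF q])
      ultimately show False using \<open>W = 0\<close> Hp by simp
    qed
  qed
next
  case False
  then have Wp: "W > 0" using W by simp
  then have Ip: "I > 0" using WI by simp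
  define a where "a = sqrt W"
  define b where "b = sqrt I"
  have ab: "a > 0" "b > 0" using Wp Ip by (auto simp: a_def b_def)
  have Wa: "W = a * a" using Wp by (simp add: a_def)
  have Ib: "I = b * b" using Ip by (simp add: b_def)
  define q where "q = a / b"
  have q0: "0 < q" using ab by (simp add: q_def)
  have "sqrt (4 * W) \<le> sqrt I" using WI by (simp only: real_sqrt_le_iff)
  moreover have "sqrt (4 * W) = 2 * a" by (simp add: a_def real_sqrt_mult)
  ultimately have "2 * a \<le> b" by (simp add: b_def)
  then have q1: "q \<le> 1/2" using ab by (simp add: q_def divide_simps)
  have s: "sqrt (W * I) = a * b" by (simp add: a_def b_def real_sqrt_mult)
  have e1: "q * I = a * b" using ab by (simp add: q_def Ib)
  have e2: "(1/q) * W = a * b" using ab by (simp add: q_def Wa)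
  have "q * I + (1/q - 2) * W = 2 * sqrt (W * I) - 2 * W"
    using e1 e2 s by (simp add: left_diff_distrib)
  then show ?thesis using key[OF q0 q1] by simp
qed

lemma positivity:
  assumes prob: "is_prob N \<nu>"
    and nz: "\<not> (\<exists>x\<in>cube N. \<exists>i<N. (dens N \<nu> (flip x i) = 0) \<noteq> (dens N \<nu> x = 0))"
  shows "\<forall>x\<in>cube N. dens N \<nu> x > 0"
proof -
  have de: "\<And>x. dens N \<nu> x = \<nu> x * 2 ^ N" by (simp add: dens_def unif_def)
  define Gz where "Gz x = (if dens N \<nu> x = 0 then 1 else (0::real))" for x
  have g: "\<forall>i. \<forall>x\<in>cube N. Gz (flip x i) - Gz x \<le> 0"
  proof (intro allI ballI)
    fix i x assume x: "x \<in> cube N"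
    show "Gz (flip x i) - Gz x \<le> 0"
    proof (cases "i < N")
      case True then show ?thesis using nz x by (auto simp: Gz_def)
    next
      case False then show ?thesis using x by (simp add: flip_out cube_def)
    qed
  qed
  obtain x0 where x0: "x0 \<in> cube N" "\<nu> x0 > 0"
  proof (rule ccontr)
    assume "\<not> thesis"
    then have "\<forall>x\<in>cube N. \<nu> x \<le> 0" using that by (meson not_le)
    then have "\<forall>x\<in>cube N. \<nu> x = 0" using prob by (auto simp: is_prob_def intro: antisym)
    then show False using prob by (simp add: is_prob_def)
  qed
  have "Gz x0 = 0" using x0 by (simp add: Gz_def de)
  show ?thesis
  proof
    fix y assume y: "y \<in> cube N"
    have "Gz y - Gz x0 \<le> 0 * real (hamming y x0)" using lip_ham[OF g y x0(1)] .
    then have "dens N \<nu> y \<noteq> 0" using \<open>Gz x0 = 0\<close> by (auto simp: Gz_def split: if_splits)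
    moreover have "dens N \<nu> y \<ge> 0" using prob y by (simp add: de is_prob_def)
    ultimately show "dens N \<nu> y > 0" by simp
  qed
qed

lemma key_bound:
  assumes prob: "is_prob N \<nu>" and pos: "\<forall>x\<in>cube N. dens N \<nu> x > 0"
    and q: "0 < q" "q \<le> 1/2"
  shows "Ent N (dens N \<nu>) / 2 ^ N \<le> q * ((\<Sum>i<N. Fi N i (dens N \<nu>)) / (2 * 2 ^ N)) + (1/q - 2) * W1 N \<nu> (unif N)"
proof -
  define \<rho> where "\<rho> = dens N \<nu>"
  have de: "\<And>x. \<rho> x = \<nu> x * 2 ^ N" by (simp add: \<rho>_def dens_def unif_def)
  have rpos: "\<forall>x\<in>cube N. \<rho> x > 0" using pos by (simp add: \<rho>_def)
  define I where "I = (\<Sum>i<N. Fi N i \<rho>) / (2 * 2 ^ N)"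
  define W where "W = W1 N \<nu> (unif N)"
  have W0: "W \<ge> 0" using W1_nonneg[OF prob] by (simp add: W_def)
  define \<rho>q where "\<rho>q = Top q N \<rho>"
  have q1: "q < 1" using q by simp
  have qpos: "\<forall>x\<in>cube N. \<rho>q x > 0" using Top_pos[OF rpos] q by (simp add: \<rho>q_def)
  have h1: "Ent N \<rho> - Ent N \<rho>q \<le> q * 2 ^ N * I"
    using Top_ent[OF rpos q(1) q1, of N] by (simp add: \<rho>q_def I_def)
  define c where "c = (1 - q) / q"
  define L where "L = ln c"
  have c1: "c \<ge> 1" using q by (simp add: c_def field_simps)
  have L0: "L \<ge> 0" using c1 by (simp add: L_def)
  have Lc: "L \<le> 1/q - 2"
  proof -
    have "L \<le> c - 1" unfolding L_def using c1 by (intro ln_le_minus_one) simp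
    also have "c - 1 = 1/q - 2" using q by (simp add: c_def field_simps)
    finally show ?thesis .
  qed
  have ratio: "\<forall>i<N. \<forall>x\<in>cube N. \<rho>q (flip x i) \<le> c * \<rho>q x"
    using Top_ratio[of N \<rho> q N] rpos q by (auto simp: \<rho>q_def c_def less_imp_le)
  define F where "F x = ln (\<rho>q x)" for x
  have lnr: "ln a - ln b \<le> L" if "a > 0" "b > 0" "a \<le> c * b" for a b
  proof -
    have "ln a \<le> ln (c * b)" using that c1 by simp
    also have "\<dots> = L + ln b" using c1 that by (simp add: ln_mult L_def)
    finally show ?thesis by simp
  qed
  have Flip: "\<forall>i. \<forall>x\<in>cube N. \<bar>F (flip x i) - F x\<bar> \<le> L"
  proof (intro allI ballI)
    fix i x assume x: "x \<in> cube N"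
    show "\<bar>F (flip x i) - F x\<bar> \<le> L"
    proof (cases "i < N")
      case True
      have a: "F (flip x i) - F x \<le> L" unfolding F_def using ratio True x qpos by (intro lnr) auto
      have "\<rho>q (flip (flip x i) i) \<le> c * \<rho>q (flip x i)" using ratio True flip_cube[OF x] by blast
      then have b: "F x - F (flip x i) \<le> L" unfolding F_def using x qpos by (intro lnr) auto
      show ?thesis using a b by simp
    next
      case False then show ?thesis using x L0 by (simp add: flip_out cube_def)
    qed
  qed
  define G where "G = Sop q N F"
  have Glip: "\<forall>i. \<forall>x\<in>cube N. \<bar>G (flip x i) - G x\<bar> \<le> L" using Sop_lip[OF Flip] q by (simp add: G_def)
  then have Glip1: "\<forall>i. \<forall>x\<in>cube N. G (flip x i) - G x \<le> L" by (meson abs_le_D1)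
  have wl: "(\<Sum>x\<in>cube N. \<nu> x * G x) - (\<Sum>y\<in>cube N. unif N y * G y) \<le> L * W"
    unfolding W_def using W1_lower[OF prob lip_ham[OF Glip1] L0] .
  have sr: "(\<Sum>x\<in>cube N. \<rho> x) = 2 ^ N" using prob by (simp add: de is_prob_def sum_distrib_right[symmetric])
  have sF: "(\<Sum>x\<in>cube N. F x) \<le> 0"
  proof -
    have "(\<Sum>x\<in>cube N. F x) \<le> (\<Sum>x\<in>cube N. \<rho>q x - 1)"
      unfolding F_def using qpos by (intro sum_mono ln_le_minus_one) auto
    also have "\<dots> = 0" using sr by (simp add: sum_subtractf \<rho>q_def Top_sum card_cube)
    finally show ?thesis .
  qed
  have "Ent N \<rho>q = (\<Sum>x\<in>cube N. \<rho> x * G x)"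
    unfolding Ent_def G_def using Top_adj[of q N \<rho> F] by (simp add: \<rho>q_def F_def)
  also have "\<dots> \<le> (\<Sum>x\<in>cube N. \<rho> x * G x) - (\<Sum>x\<in>cube N. G x)"
    using sF Sop_sum[of q N F] by (simp add: G_def)
  also have "\<dots> = 2 ^ N * ((\<Sum>x\<in>cube N. \<nu> x * G x) - (\<Sum>y\<in>cube N. unif N y * G y))"
    by (simp add: de unif_def right_diff_distrib sum_distrib_left sum_divide_distrib[symmetric] algebra_simps)
  also have "\<dots> \<le> 2 ^ N * (L * W)" using wl by simp
  finally have h2: "Ent N \<rho>q \<le> 2 ^ N * (L * W)" .
  have "Ent N \<rho> / 2 ^ N \<le> (q * 2 ^ N * I + 2 ^ N * (L * W)) / 2 ^ N"
    using h1 h2 by (intro divide_right_mono) auto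
  also have "\<dots> = q * I + L * W" by (simp add: field_simps)
  also have "\<dots> \<le> q * I + (1/q - 2) * W" using Lc W0 by (simp add: mult_right_mono)
  finally show ?thesis by (simp add: \<rho>_def I_def W_def)
qed

theorem mainTheorem1:
  fixes N :: nat and \<nu> :: "bool list \<Rightarrow> real"
  assumes "N \<ge> 1"
    and "is_prob N \<nu>"
    and "fisher_info N \<nu> \<ge> ereal (4 * W1 N \<nu> (unif N))"
  shows "fisher_info N \<nu> = \<infinity> \<or>
         rel_entropy N \<nu> \<le> 2 * sqrt (W1 N \<nu> (unif N) * real_of_ereal (fisher_info N \<nu>))
                              - 2 * W1 N \<nu> (unif N)"
proof (cases "\<exists>x\<in>cube N. \<exists>i<N. (dens N \<nu> (flip x i) = 0) \<noteq> (dens N \<nu> x = 0)")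
  case True
  then show ?thesis by (simp add: fisher_info_def)
next
  case False
  have pos: "\<forall>x\<in>cube N. dens N \<nu> x > 0" using positivity[OF assms(2) False] .
  define I where "I = (\<Sum>i<N. Fi N i (dens N \<nu>)) / (2 * 2 ^ N)"
  have fsum: "(\<Sum>x\<in>cube N. \<Sum>i<N.
        (if dens N \<nu> x = 0 \<and> dens N \<nu> (flip x i) = 0 then 0 else
          (dens N \<nu> (flip x i) - dens N \<nu> x) * (ln (dens N \<nu> (flip x i)) - ln (dens N \<nu> x)))
        * unif N x) = (\<Sum>x\<in>cube N. \<Sum>i<N. Psi (dens N \<nu> (flip x i)) (dens N \<nu> x) / 2 ^ N)"
    using pos by (intro sum.cong refl) (auto simp: Psi_def unif_def)
  also have "\<dots> = (\<Sum>i<N. \<Sum>x\<in>cube N. Psi (dens N \<nu> (flip x i)) (dens N \<nu> x) / 2 ^ N)"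
    by (rule sum.swap)
  also have "\<dots> = (\<Sum>i<N. Fi N i (dens N \<nu>)) / 2 ^ N"
    by (simp add: Fi_def sum_divide_distrib)
  finally have fsum' : "(\<Sum>x\<in>cube N. \<Sum>i<N.
        (if dens N \<nu> x = 0 \<and> dens N \<nu> (flip x i) = 0 then 0 else
          (dens N \<nu> (flip x i) - dens N \<nu> x) * (ln (dens N \<nu> (flip x i)) - ln (dens N \<nu> x)))
        * unif N x) = (\<Sum>i<N. Fi N i (dens N \<nu>)) / 2 ^ N" .
  have fi: "fisher_info N \<nu> = ereal I"
    unfolding fisher_info_def using False by (simp only: if_False fsum') (simp add: I_def)
  have H: "rel_entropy N \<nu> = Ent N (dens N \<nu>) / 2 ^ N"
    unfolding rel_entropy_def Ent_def using pos
    by (simp add: unif_def sum_divide_distrib) (rule sum.cong[OF refl], auto)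
  define W where "W = W1 N \<nu> (unif N)"
  have W0: "W \<ge> 0" using W1_nonneg[OF assms(2)] by (simp add: W_def)
  have WI: "4 * W \<le> I" using assms(3) fi by (simp add: W_def)
  have key: "rel_entropy N \<nu> \<le> q * I + (1/q - 2) * W" if "0 < q" "q \<le> 1/2" for q
    using key_bound[OF assms(2) pos that] H by (simp add: I_def W_def)
  have "rel_entropy N \<nu> \<le> 2 * sqrt (W * I) - 2 * W"
    by (rule final_arith[OF W0 WI key])
  then show ?thesis using fi by (simp add: W_def)
qed

end
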